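(* Assume $\bar p=1/2$. For every distribution $\eta$ on $\mathcal R$, $\lim_{n\to\infty}E_\eta[F_{n+1}]/n=1$. Moreover there exist constants $c_1,c_2>0$ such that for every $n\in\mathbb N$ and every distribution $\eta$ on $\mathcal R$, $$\big|E_\eta[F_{n+1}]-n-(1+\eta\cdot\tilde{\mathbf r})\big|\le c_1e^{-c_2n},\qquad\text{where }\tilde{\mathbf r}=(I-K+2\mathbf p\,\mu D_pK)^{-1}(\mathbf 1-\mathbf p)-\mathbf 1.$$
   Context: Let $\mathcal R=\{1,\dots,N\}$ and let $K$ be a stochastic matrix on $\mathcal R$ whose Markov chain has a unique closed irreducible subset; let $\mu$ (row vector) be its unique stationary distribution. Fix $p:\mathcal R\to(0,1)$, $\mathbf p=(p(1),\dots,p(N))^t$, $\mathbf 1$ the all-ones column vector, $I$ the identity, $D_p$ the diagonal matrix with entries $p(i)$, $\bar p=\mu\cdot\mathbf p$. Under $P_\eta$, $(R_j)_{j\ge1}$ is a Markov chain with transition matrix $K$ and $R_1\sim\eta$, and given $(R_j)$ the $\xi(j)$ are independent Bernoulli$(p(R_j))$. $F_m=\inf\{k\ge0:\sum_{j=1}^{k+m}\xi(j)=m\}$ is the number of failures before the $m$-th success. (Equivalently $E_\eta[F_{n+1}]=E_\eta[V_1\mid V_0=n]$ for the backward branching-like process $V_i=F^i_{V_{i-1}+1}$.) *)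

theory Defs
  imports "HOL-Analysis.Analysis"
begin

text \<open>States R = {1..N} are modelled by a finite type 'n (N = CARD('n)).
 Matrices are real^'n^'n, row vectors (distributions) and column vectors are real^'n.\<close>

definition stochastic_matrix :: "real^'n^'n \<Rightarrow> bool" where
  "stochastic_matrix K \<longleftrightarrow> (\<forall>i j. K$i$j \<ge> 0) \<and> (\<forall>i. (\<Sum>j\<in>UNIV. K$i$j) = 1)"

definition prob_vector :: "real^'n \<Rightarrow> bool" where
  "prob_vector \<eta> \<longleftrightarrow> (\<forall>i. \<eta>$i \<ge> 0) \<and> (\<Sum>i\<in>UNIV. \<eta>$i) = 1"

definition step_rel :: "real^'n^'n \<Rightarrow> ('n \<times> 'n) set" where
  "step_rel K = {(i, j). K$i$j > 0}"

definition closed_set :: "real^'n^'n \<Rightarrow> 'n set \<Rightarrow> bool" where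
  "closed_set K C \<longleftrightarrow> (\<forall>i\<in>C. \<forall>j. K$i$j > 0 \<longrightarrow> j \<in> C)"

definition irreducible_set :: "real^'n^'n \<Rightarrow> 'n set \<Rightarrow> bool" where
  "irreducible_set K C \<longleftrightarrow> C \<noteq> {} \<and> (\<forall>i\<in>C. \<forall>j\<in>C. (i, j) \<in> (step_rel K)\<^sup>*)"

definition unique_closed_irreducible :: "real^'n^'n \<Rightarrow> bool" where
  "unique_closed_irreducible K \<longleftrightarrow> (\<exists>!C. closed_set K C \<and> irreducible_set K C)"

definition stationary_dist :: "real^'n^'n \<Rightarrow> real^'n \<Rightarrow> bool" where
  "stationary_dist K \<mu> \<longleftrightarrow> prob_vector \<mu> \<and> \<mu> v* K = \<mu>"

definition bern :: "real^'n \<Rightarrow> 'n \<Rightarrow> bool \<Rightarrow> real" where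
  "bern p r b = (if b then p$r else 1 - p$r)"

text \<open>Probability that, starting (already) in state r, the next states and outcomes are xs.\<close>
fun trans_prob :: "real^'n^'n \<Rightarrow> real^'n \<Rightarrow> 'n \<Rightarrow> ('n \<times> bool) list \<Rightarrow> real" where
  "trans_prob K p r [] = 1"
| "trans_prob K p r ((s, b) # xs) = K$r$s * bern p s b * trans_prob K p s xs"

text \<open>P_eta((R_1,xi(1)),...,(R_L,xi(L))) = xs : finite-dimensional distributions.\<close>
fun path_prob :: "real^'n^'n \<Rightarrow> real^'n \<Rightarrow> real^'n \<Rightarrow> ('n \<times> bool) list \<Rightarrow> real" where
  "path_prob K p \<eta> [] = 1"
| "path_prob K p \<eta> ((r, b) # xs) = \<eta>$r * bern p r b * trans_prob K p r xs"

definition successes :: "('n \<times> bool) list \<Rightarrow> nat" where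
  "successes xs = length (filter snd xs)"

text \<open>P_eta(F_m = k), where F_m = inf{k \<ge> 0. sum_{j=1}^{k+m} xi(j) = m}.\<close>
definition prob_F_eq :: "real^'n^'n \<Rightarrow> real^'n \<Rightarrow> real^'n \<Rightarrow> nat \<Rightarrow> nat \<Rightarrow> real" where
  "prob_F_eq K p \<eta> m k =
     (\<Sum>xs\<in>{xs :: ('n \<times> bool) list. length xs = k + m \<and> successes xs = m
              \<and> (\<forall>k'<k. successes (take (k' + m) xs) \<noteq> m)}. path_prob K p \<eta> xs)"

definition expect_F :: "real^'n^'n \<Rightarrow> real^'n \<Rightarrow> real^'n \<Rightarrow> nat \<Rightarrow> real" where
  "expect_F K p \<eta> m = (\<Sum>k. real k * prob_F_eq K p \<eta> m k)"

definition diag_mat :: "real^'n \<Rightarrow> real^'n^'n" where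
  "diag_mat p = (\<chi> i j. if i = j then p$i else 0)"

definition outer :: "real^'n \<Rightarrow> real^'n \<Rightarrow> real^'n^'n" where
  "outer a b = (\<chi> i j. a$i * b$j)"

definition r_tilde :: "real^'n^'n \<Rightarrow> real^'n \<Rightarrow> real^'n \<Rightarrow> real^'n" where
  "r_tilde K p \<mu> =
     matrix_inv (mat 1 - K + 2 *\<^sub>R outer p (\<mu> v* (diag_mat p ** K))) *v (vec 1 - p) - vec 1"

end

theory Submission
  imports Defs
begin


lemma closed_irred_sub:
  fixes K :: "real^'n^'n"
  shows "closed_set K S \<Longrightarrow> S \<noteq> {} \<Longrightarrow> \<exists>T\<subseteq>S. closed_set K T \<and> irreducible_set K T"
proof (induction "card S" arbitrary: S rule: less_induct)
  case less
  show ?case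
  proof (cases "irreducible_set K S")
    case True thus ?thesis using less by blast
  next
    case False
    then obtain i j where ij: "i\<in>S" "j\<in>S" "(i,j) \<notin> (step_rel K)\<^sup>*"
      using less.prems unfolding irreducible_set_def by blast
    define R where "R = {l. (i,l) \<in> (step_rel K)\<^sup>*}"
    have RS: "R \<subseteq> S"
    proof
      fix l assume "l \<in> R"
      hence "(i,l) \<in> (step_rel K)\<^sup>*" by (simp add: R_def)
      thus "l \<in> S"
        by (induction rule: rtrancl_induct)
           (use ij less.prems in \<open>auto simp: closed_set_def step_rel_def\<close>)
    qed
    have Rc: "closed_set K R"
      unfolding closed_set_def R_def
      by (auto intro: rtrancl_into_rtrancl simp: step_rel_def)
    have "i \<in> R" by (simp add: R_def)
    moreover have "j \<notin> R" using ij by (simp add: R_def)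
    ultimately have "card R < card S"
      using RS ij by (intro psubset_card_mono) auto
    then obtain T where "T \<subseteq> R" "closed_set K T" "irreducible_set K T"
      using less.hyps[of R] Rc \<open>i\<in>R\<close> by blast
    thus ?thesis using RS by blast
  qed
qed

lemma uci_s0:
  fixes K :: "real^'n^'n"
  assumes st: "stochastic_matrix K" and u: "unique_closed_irreducible K"
  shows "\<exists>s0. (\<forall>i. (i,s0) \<in> (step_rel K)\<^sup>+) \<and>
              (\<forall>S. closed_set K S \<and> S \<noteq> {} \<longrightarrow> s0 \<in> S)"
proof -
  obtain C where C: "closed_set K C" "irreducible_set K C"
    and Cu: "\<And>D. closed_set K D \<and> irreducible_set K D \<Longrightarrow> D = C"
    using u unfolding unique_closed_irreducible_def by metis
  obtain s0 where s0: "s0 \<in> C" using C unfolding irreducible_set_def by blast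
  have sub: "s0 \<in> S" if "closed_set K S" "S \<noteq> {}" for S
    using closed_irred_sub[OF that] Cu s0 by blast
  have "(i,s0) \<in> (step_rel K)\<^sup>+" for i
  proof -
    define R where "R = {l. (i,l) \<in> (step_rel K)\<^sup>+}"
    have Rc: "closed_set K R"
      unfolding closed_set_def R_def
      by (auto intro: trancl_into_trancl simp: step_rel_def)
    have "\<exists>j. K$i$j > 0"
    proof (rule ccontr)
      assume "\<not> ?thesis"
      hence "\<forall>j. K$i$j = 0" using st unfolding stochastic_matrix_def
        by (meson antisym not_less)
      hence "(\<Sum>j\<in>UNIV. K$i$j) = 0" by simp
      thus False using st unfolding stochastic_matrix_def by simp
    qed
    then obtain j where "K$i$j > 0" by blast
    hence "j \<in> R" by (auto simp: R_def step_rel_def)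
    hence "s0 \<in> R" using sub[OF Rc] by blast
    thus ?thesis by (simp add: R_def)
  qed
  thus ?thesis using sub by blast
qed



lemma Kmean_swap:
  fixes K :: "real^'n^'n"
  assumes "\<mu> v* K = \<mu>"
  shows "(\<Sum>i\<in>UNIV. \<mu>$i * (\<Sum>j\<in>UNIV. K$i$j * y$j)) = (\<Sum>j\<in>UNIV. \<mu>$j * y$j)"
proof -
  have "(\<Sum>i\<in>UNIV. \<mu>$i * (\<Sum>j\<in>UNIV. K$i$j * y$j)) = (\<Sum>j\<in>UNIV. (\<Sum>i\<in>UNIV. \<mu>$i * K$i$j) * y$j)"
    by (simp add: sum_distrib_left sum_distrib_right mult.assoc mult.left_commute)
       (rule sum.swap)
  also have "\<dots> = (\<Sum>j\<in>UNIV. \<mu>$j * y$j)"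
  proof -
    have "\<And>j. (\<Sum>i\<in>UNIV. \<mu>$i * K$i$j) = \<mu>$j"
      using assms by (metis (no_types) vector_matrix_mult_def vec_lambda_beta)
    thus ?thesis by simp
  qed
  finally show ?thesis .
qed

lemma harm_le:
  fixes K :: "real^'n^'n"
  assumes st: "stochastic_matrix K"
    and s0: "\<forall>S. closed_set K S \<and> S \<noteq> {} \<longrightarrow> s0 \<in> S"
    and h: "\<forall>i. x$i = (\<Sum>j\<in>UNIV. K$i$j * x$j)"
  shows "x$i \<le> x$s0"
proof -
  define Mx where "Mx = Max (range (\<lambda>i. x$i))"
  have ge: "x$j \<le> Mx" for j unfolding Mx_def by (simp add: Max_ge)
  define S where "S = {i. x$i = Mx}"
  have "Mx \<in> range (\<lambda>i. x$i)" unfolding Mx_def by (rule Max_in) auto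
  hence "S \<noteq> {}" unfolding S_def by auto
  moreover have "closed_set K S"
    unfolding closed_set_def
  proof (intro ballI allI impI)
    fix i j assume iS: "i \<in> S" and kij: "K$i$j > 0"
    have rs: "(\<Sum>j\<in>UNIV. K$i$j) = 1" and nn: "\<And>j. K$i$j \<ge> 0"
      using st unfolding stochastic_matrix_def by auto
    have "(\<Sum>l\<in>UNIV. K$i$l * (Mx - x$l)) = (\<Sum>l\<in>UNIV. Mx * K$i$l) - (\<Sum>l\<in>UNIV. K$i$l * x$l)"
      by (simp add: right_diff_distrib sum_subtractf mult.commute)
    also have "(\<Sum>l\<in>UNIV. Mx * K$i$l) = Mx"
      by (simp add: sum_distrib_left[symmetric] rs)
    also have "Mx - (\<Sum>l\<in>UNIV. K$i$l * x$l) = 0" using h[rule_format, of i] iS by (simp add: S_def)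
    finally have "(\<Sum>l\<in>UNIV. K$i$l * (Mx - x$l)) = 0" .
    moreover have "\<forall>l\<in>UNIV. 0 \<le> K$i$l * (Mx - x$l)" using nn ge by simp
    ultimately have "K$i$j * (Mx - x$j) = 0"
      using sum_nonneg_eq_0_iff[of UNIV "\<lambda>l. K$i$l * (Mx - x$l)"] by simp
    thus "j \<in> S" using kij by (simp add: S_def)
  qed
  ultimately have "s0 \<in> S" using s0 by blast
  thus ?thesis using ge by (simp add: S_def)
qed

lemma harm_const:
  fixes K :: "real^'n^'n"
  assumes st: "stochastic_matrix K"
    and s0: "\<forall>S. closed_set K S \<and> S \<noteq> {} \<longrightarrow> s0 \<in> S"
    and h: "\<forall>i. x$i = (\<Sum>j\<in>UNIV. K$i$j * x$j)"
  shows "x$i = x$s0"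
proof -
  have "(-x)$i \<le> (-x)$s0"
  proof (rule harm_le[OF st s0], intro allI)
    fix i
    have "(\<Sum>j\<in>UNIV. K$i$j * (-x)$j) = - (\<Sum>j\<in>UNIV. K$i$j * x$j)" by (simp add: sum_negf)
    moreover have "(-x)$i = - x$i" by simp
    ultimately show "(-x)$i = (\<Sum>j\<in>UNIV. K$i$j * (-x)$j)" using h[rule_format, of i] by linarith
  qed
  thus ?thesis using harm_le[OF st s0 h, of i] by simp
qed

lemma vrow:
  fixes K :: "real^'n^'n"
  shows "(\<mu> v* (diag_mat p ** K))$j = (\<Sum>i\<in>UNIV. \<mu>$i * p$i * K$i$j)"
proof -
  have "\<And>i. (\<Sum>k\<in>UNIV. (diag_mat p)$i$k * K$k$j) = p$i * K$i$j"
  proof -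
    fix i
    have "(\<Sum>k\<in>UNIV. (diag_mat p)$i$k * K$k$j) = (\<Sum>k\<in>UNIV. if i = k then p$i * K$i$j else 0)"
      by (rule sum.cong) (auto simp: diag_mat_def)
    thus "(\<Sum>k\<in>UNIV. (diag_mat p)$i$k * K$k$j) = p$i * K$i$j" by simp
  qed
  thus ?thesis by (simp add: vector_matrix_mult_def matrix_matrix_mult_def mult.assoc)
qed

lemma Mrow:
  fixes K :: "real^'n^'n"
  shows "((mat 1 - K + 2 *\<^sub>R outer p (\<mu> v* (diag_mat p ** K))) *v y)$i
    = y$i - (\<Sum>j\<in>UNIV. K$i$j * y$j) + 2 * p$i * (\<Sum>j\<in>UNIV. (\<Sum>l\<in>UNIV. \<mu>$l * p$l * K$l$j) * y$j)"
proof -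
  have "(\<Sum>j\<in>UNIV. (mat 1 :: real^'n^'n)$i$j * y$j) = y$i"
  proof -
    have "(\<Sum>j\<in>UNIV. (mat 1 :: real^'n^'n)$i$j * y$j) = (\<Sum>j\<in>UNIV. if i = j then y$i else 0)"
      by (rule sum.cong) (auto simp: mat_def)
    thus ?thesis by simp
  qed
  moreover have "(\<Sum>j\<in>UNIV. (outer p (\<mu> v* (diag_mat p ** K)))$i$j * y$j)
     = p$i * (\<Sum>j\<in>UNIV. (\<Sum>l\<in>UNIV. \<mu>$l * p$l * K$l$j) * y$j)"
  proof -
    have "\<And>j. (outer p (\<mu> v* (diag_mat p ** K)))$i$j * y$j = p$i * ((\<Sum>l\<in>UNIV. \<mu>$l * p$l * K$l$j) * y$j)"
      by (simp add: outer_def vrow)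
    thus ?thesis by (simp only: sum_distrib_left)
  qed
  moreover have "(\<Sum>j\<in>UNIV. y$j * (2 * (outer p (\<mu> v* (diag_mat p ** K)))$i$j))
     = 2 * (\<Sum>j\<in>UNIV. y$j * (outer p (\<mu> v* (diag_mat p ** K)))$i$j)"
    by (simp add: sum_distrib_left algebra_simps)
  ultimately show ?thesis
    by (simp add: matrix_vector_mult_def sum.distrib sum_subtractf algebra_simps sum_distrib_left[symmetric])
qed



lemma ell_sum:
  fixes K :: "real^'n^'n"
  assumes st: "stochastic_matrix K"
  shows "(\<Sum>j\<in>UNIV. (\<Sum>l\<in>UNIV. \<mu>$l * p$l * K$l$j)) = (\<Sum>l\<in>UNIV. \<mu>$l * p$l)"
proof -
  have "(\<Sum>j\<in>UNIV. (\<Sum>l\<in>UNIV. \<mu>$l * p$l * K$l$j)) = (\<Sum>l\<in>UNIV. \<mu>$l * p$l * (\<Sum>j\<in>UNIV. K$l$j))"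
    by (subst sum.swap) (simp add: sum_distrib_left)
  thus ?thesis using st by (simp add: stochastic_matrix_def)
qed

lemma mu_p: "\<mu> \<bullet> p = (\<Sum>l\<in>UNIV. \<mu>$l * p$l)"
  by (simp add: inner_vec_def)

lemma row_lin:
  fixes K :: "real^'n^'n"
  assumes st: "stochastic_matrix K"
  shows "(\<Sum>j\<in>UNIV. K$i$j * (a * y$j + b)) = a * (\<Sum>j\<in>UNIV. K$i$j * y$j) + b"
proof -
  have "(\<Sum>j\<in>UNIV. K$i$j * (a * y$j + b)) = a * (\<Sum>j\<in>UNIV. K$i$j * y$j) + b * (\<Sum>j\<in>UNIV. K$i$j)"
    by (simp add: algebra_simps sum.distrib sum_distrib_left)
  thus ?thesis using st by (simp add: stochastic_matrix_def)
qed

lemma Mx_mu: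
  fixes K :: "real^'n^'n"
  assumes st: "stochastic_matrix K" and stat: "\<mu> v* K = \<mu>"
  shows "(\<Sum>i\<in>UNIV. \<mu>$i * (y$i - (\<Sum>j\<in>UNIV. K$i$j * y$j) + 2 * p$i * c)) = 2 * c * (\<Sum>l\<in>UNIV. \<mu>$l * p$l)"
proof -
  have "(\<Sum>i\<in>UNIV. \<mu>$i * (y$i - (\<Sum>j\<in>UNIV. K$i$j * y$j) + 2 * p$i * c))
     = (\<Sum>i\<in>UNIV. \<mu>$i * y$i) - (\<Sum>i\<in>UNIV. \<mu>$i * (\<Sum>j\<in>UNIV. K$i$j * y$j)) + 2 * c * (\<Sum>l\<in>UNIV. \<mu>$l * p$l)"
    by (simp add: algebra_simps sum.distrib sum_subtractf sum_distrib_left)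
  thus ?thesis using Kmean_swap[OF stat, of y] by simp
qed

lemma M_invertible:
  fixes K :: "real^'n^'n"
  assumes st: "stochastic_matrix K" and stat: "\<mu> v* K = \<mu>"
    and s0: "\<forall>S. closed_set K S \<and> S \<noteq> {} \<longrightarrow> s0 \<in> S"
    and half: "\<mu> \<bullet> p = 1/2"
  shows "invertible (mat 1 - K + 2 *\<^sub>R outer p (\<mu> v* (diag_mat p ** K)))"
  unfolding invertible_left_inverse matrix_left_invertible_ker
proof (intro allI impI)
  fix x :: "real^'n"
  assume as: "(mat 1 - K + 2 *\<^sub>R outer p (\<mu> v* (diag_mat p ** K))) *v x = 0"
  have eq: "x$i - (\<Sum>j\<in>UNIV. K$i$j * x$j) + 2 * p$i * (\<Sum>j\<in>UNIV. (\<Sum>l\<in>UNIV. \<mu>$l * p$l * K$l$j) * x$j) = 0" for i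
  proof -
    have "((mat 1 - K + 2 *\<^sub>R outer p (\<mu> v* (diag_mat p ** K))) *v x)$i = 0" using as by simp
    thus ?thesis by (simp only: Mrow)
  qed
  define c where "c = (\<Sum>j\<in>UNIV. (\<Sum>l\<in>UNIV. \<mu>$l * p$l * K$l$j) * x$j)"
  have "2 * c * (\<Sum>l\<in>UNIV. \<mu>$l * p$l) = 0"
    using Mx_mu[OF st stat, of x p c] eq by (simp add: c_def)
  hence c0: "c = 0" using half mu_p[of \<mu> p] by simp
  have h: "\<forall>i. x$i = (\<Sum>j\<in>UNIV. K$i$j * x$j)"
  proof
    fix i
    have "x$i - (\<Sum>j\<in>UNIV. K$i$j * x$j) + 2 * p$i * c = 0" using eq[of i] by (simp only: c_def)
    thus "x$i = (\<Sum>j\<in>UNIV. K$i$j * x$j)" using c0 by simp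
  qed
  have cst: "\<And>i. x$i = x$s0" using harm_const[OF st s0 h] .
  have "c = x$s0 * (\<Sum>j\<in>UNIV. (\<Sum>l\<in>UNIV. \<mu>$l * p$l * K$l$j))"
    unfolding c_def by (subst cst) (simp add: sum_distrib_left mult.commute)
  hence "c = x$s0 / 2" using ell_sum[OF st, of \<mu> p] half mu_p[of \<mu> p] by simp
  hence "x$s0 = 0" using c0 by simp
  thus "x = 0" using cst by (simp add: vec_eq_iff)
qed

lemma rt_props:
  fixes K :: "real^'n^'n"
  assumes st: "stochastic_matrix K" and stat: "\<mu> v* K = \<mu>" and pm: "(\<Sum>i\<in>UNIV. \<mu>$i) = 1"
    and s0: "\<forall>S. closed_set K S \<and> S \<noteq> {} \<longrightarrow> s0 \<in> S"
    and half: "\<mu> \<bullet> p = 1/2"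
  shows "\<forall>i. (r_tilde K p \<mu>)$i - (\<Sum>j\<in>UNIV. K$i$j * (r_tilde K p \<mu>)$j) = 1 - 2 * p$i"
    and "(\<Sum>j\<in>UNIV. (\<Sum>l\<in>UNIV. \<mu>$l * p$l * K$l$j) * (r_tilde K p \<mu>)$j) = 0"
proof -
  define M where "M = mat 1 - K + 2 *\<^sub>R outer p (\<mu> v* (diag_mat p ** K))"
  have inv: "invertible M" unfolding M_def by (rule M_invertible[OF st stat s0 half])
  hence "M ** matrix_inv M = mat 1"
    unfolding matrix_inv_def invertible_def by (rule someI_ex[where P="\<lambda>A'. M ** A' = mat 1 \<and> A' ** M = mat 1", THEN conjunct1])
  define y where "y = matrix_inv M *v (vec 1 - p)"
  have My: "M *v y = vec 1 - p"
    unfolding y_def by (simp add: matrix_vector_mul_assoc \<open>M ** matrix_inv M = mat 1\<close>)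
  have r: "r_tilde K p \<mu> = y - vec 1" unfolding r_tilde_def y_def M_def ..
  define c where "c = (\<Sum>j\<in>UNIV. (\<Sum>l\<in>UNIV. \<mu>$l * p$l * K$l$j) * y$j)"
  have eq: "\<And>i. y$i - (\<Sum>j\<in>UNIV. K$i$j * y$j) + 2 * p$i * c = 1 - p$i"
  proof -
    fix i
    have "(M *v y)$i = 1 - p$i" using My by simp
    thus "y$i - (\<Sum>j\<in>UNIV. K$i$j * y$j) + 2 * p$i * c = 1 - p$i"
      unfolding M_def c_def by (simp only: Mrow)
  qed
  have "(\<Sum>i\<in>UNIV. \<mu>$i * (y$i - (\<Sum>j\<in>UNIV. K$i$j * y$j) + 2 * p$i * c)) = (\<Sum>i\<in>UNIV. \<mu>$i * (1 - p$i))"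
    by (simp add: eq)
  also have "\<dots> = 1 - 1/2" using pm half mu_p[of \<mu> p] by (simp add: algebra_simps sum_subtractf)
  finally have "2 * c * (\<Sum>l\<in>UNIV. \<mu>$l * p$l) = 1/2" using Mx_mu[OF st stat, of y p c] by simp
  moreover have S: "(\<Sum>l\<in>UNIV. \<mu>$l * p$l) = 1/2" using half mu_p[of \<mu> p] by simp
  ultimately have c: "c = 1/2" by simp
  have rK: "(\<Sum>j\<in>UNIV. K$i$j * (r_tilde K p \<mu>)$j) = (\<Sum>j\<in>UNIV. K$i$j * y$j) - 1" for i
    using row_lin[OF st, of i 1 y "-1"] unfolding r by simp
  show "\<forall>i. (r_tilde K p \<mu>)$i - (\<Sum>j\<in>UNIV. K$i$j * (r_tilde K p \<mu>)$j) = 1 - 2 * p$i"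
    using eq c rK unfolding r by (simp add: algebra_simps)
  have "(\<Sum>j\<in>UNIV. (\<Sum>l\<in>UNIV. \<mu>$l * p$l * K$l$j) * (r_tilde K p \<mu>)$j)
     = c - (\<Sum>j\<in>UNIV. (\<Sum>l\<in>UNIV. \<mu>$l * p$l * K$l$j))"
    unfolding r c_def by (simp add: algebra_simps sum_subtractf)
  also have "\<dots> = 0" using c ell_sum[OF st, of \<mu> p] half mu_p[of \<mu> p] by simp
  finally show "(\<Sum>j\<in>UNIV. (\<Sum>l\<in>UNIV. \<mu>$l * p$l * K$l$j) * (r_tilde K p \<mu>)$j) = 0" .
qed



definition vset :: "nat \<Rightarrow> nat \<Rightarrow> ('n::finite \<times> bool) list set" where
  "vset m k = {xs. length xs = k + m \<and> successes xs = m \<and> (\<forall>k'<k. successes (take (k'+m) xs) \<noteq> m)}"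

lemma pF_vset: "prob_F_eq K p \<eta> m k = sum (path_prob K p \<eta>) (vset m k)"
  by (simp add: prob_F_eq_def vset_def)

lemma vset_finite: "finite (vset m k :: ('n::finite \<times> bool) list set)"
proof -
  have "vset m k \<subseteq> {xs. set xs \<subseteq> UNIV \<and> length xs = k + m}" by (auto simp: vset_def)
  moreover have "finite {xs :: ('n \<times> bool) list. set xs \<subseteq> UNIV \<and> length xs = k + m}"
    by (rule finite_lists_length_eq) (rule finite)
  ultimately show ?thesis using finite_subset by blast
qed

lemma succ_Cons: "successes ((r,b)#ys) = (if b then Suc (successes ys) else successes ys)"
  by (simp add: successes_def)

lemma succ_le: "successes xs \<le> length xs"
  by (simp add: successes_def)

lemma vset_0: "vset 0 k = (if k = 0 then {[]} else {})"
proof (cases k)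
  case 0 thus ?thesis by (auto simp: vset_def successes_def)
next
  case (Suc k')
  have "xs \<notin> vset 0 k" for xs
    using Suc by (auto simp: vset_def successes_def elim!: allE[of _ 0])
  thus ?thesis using Suc by auto
qed

lemma vset_Suc:
  "vset (Suc m) k = (\<lambda>(r,ys). (r,True)#ys) ` (UNIV \<times> vset m k) \<union>
     (if k = 0 then {} else (\<lambda>(r,ys). (r,False)#ys) ` (UNIV \<times> vset (Suc m) (k-1)))"
proof (intro equalityI subsetI)
  fix xs :: "('a \<times> bool) list" assume xs: "xs \<in> vset (Suc m) k"
  hence len: "length xs = k + Suc m" and sx: "successes xs = Suc m"
    and cond: "\<And>k'. k' < k \<Longrightarrow> successes (take (k' + Suc m) xs) \<noteq> Suc m"
    by (auto simp: vset_def)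
  obtain r b ys where xsd: "xs = (r,b)#ys" using len by (cases xs) auto
  show "xs \<in> (\<lambda>(r,ys). (r,True)#ys) ` (UNIV \<times> vset m k) \<union>
     (if k = 0 then {} else (\<lambda>(r,ys). (r,False)#ys) ` (UNIV \<times> vset (Suc m) (k-1)))"
  proof (cases b)
    case True
    have "ys \<in> vset m k"
      unfolding vset_def
    proof (intro CollectI conjI allI impI)
      show "length ys = k + m" using len xsd by simp
      show "successes ys = m" using sx xsd True by (simp add: succ_Cons)
      fix k' assume "k' < k"
      hence "successes (take (k' + Suc m) xs) \<noteq> Suc m" by (rule cond)
      thus "successes (take (k' + m) ys) \<noteq> m" using xsd True by (simp add: succ_Cons)
    qed
    thus ?thesis using xsd True by auto
  next
    case False
    have sy: "successes ys = Suc m" using sx xsd False by (simp add: succ_Cons)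
    have k0: "k \<noteq> 0"
    proof
      assume "k = 0"
      hence "length ys = m" using len xsd by simp
      thus False using succ_le[of ys] sy by simp
    qed
    have "ys \<in> vset (Suc m) (k-1)"
      unfolding vset_def
    proof (intro CollectI conjI allI impI)
      show "length ys = k - 1 + Suc m" using len xsd k0 by simp
      show "successes ys = Suc m" by (rule sy)
      fix k' assume "k' < k - 1"
      hence "Suc k' < k" by simp
      hence "successes (take (Suc k' + Suc m) xs) \<noteq> Suc m" by (rule cond)
      thus "successes (take (k' + Suc m) ys) \<noteq> Suc m" using xsd False by (simp add: succ_Cons)
    qed
    thus ?thesis using xsd False k0 by auto
  qed
next
  fix xs :: "('a \<times> bool) list"
  assume "xs \<in> (\<lambda>(r,ys). (r,True)#ys) ` (UNIV \<times> vset m k) \<union>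
     (if k = 0 then {} else (\<lambda>(r,ys). (r,False)#ys) ` (UNIV \<times> vset (Suc m) (k-1)))"
  then consider (T) r ys where "xs = (r,True)#ys" "ys \<in> vset m k"
    | (F) r ys where "xs = (r,False)#ys" "ys \<in> vset (Suc m) (k-1)" "k \<noteq> 0"
    by (auto split: if_splits)
  thus "xs \<in> vset (Suc m) k"
  proof cases
    case T
    thus ?thesis unfolding vset_def
      by (auto simp: succ_Cons vset_def)
  next
    case F
    hence len: "length ys = k - 1 + Suc m" and sy: "successes ys = Suc m"
      and cond: "\<And>k'. k' < k - 1 \<Longrightarrow> successes (take (k' + Suc m) ys) \<noteq> Suc m"
      by (auto simp: vset_def)
    show ?thesis unfolding vset_def
    proof (intro CollectI conjI allI impI)
      show "length xs = k + Suc m" using F len by simp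
      show "successes xs = Suc m" using F sy by (simp add: succ_Cons)
      fix k' assume k': "k' < k"
      show "successes (take (k' + Suc m) xs) \<noteq> Suc m"
      proof (cases k')
        case 0
        have "successes (take m ys) \<le> m" using succ_le[of "take m ys"] by simp
        thus ?thesis using F 0 by (simp add: succ_Cons)
      next
        case (Suc k2)
        hence "k2 < k - 1" using k' by simp
        hence "successes (take (k2 + Suc m) ys) \<noteq> Suc m" by (rule cond)
        thus ?thesis using F Suc by (simp add: succ_Cons)
      qed
    qed
  qed
qed



lemma tp_pp: "trans_prob K p r xs = path_prob K p (K$r) xs"
  by (cases xs) auto

lemma pF_0: "prob_F_eq K p \<eta> 0 k = (if k = 0 then 1 else 0)"
  by (simp add: pF_vset vset_0)

lemma pF_Suc:
  fixes K :: "real^'n^'n"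
  shows "prob_F_eq K p \<eta> (Suc m) k = (\<Sum>r\<in>UNIV. \<eta>$r * (p$r * prob_F_eq K p (K$r) m k
      + (1 - p$r) * (if k = 0 then 0 else prob_F_eq K p (K$r) (Suc m) (k-1))))"
proof -
  define A where "A = (\<lambda>(r,ys). (r,True)#ys) ` (UNIV \<times> (vset m k :: ('n \<times> bool) list set))"
  define B where "B = (if k = 0 then {} else (\<lambda>(r,ys). (r,False)#ys) ` (UNIV \<times> (vset (Suc m) (k-1) :: ('n \<times> bool) list set)))"
  have fA: "finite A" unfolding A_def by (intro finite_imageI finite_cartesian_product vset_finite finite)
  have fB: "finite B" unfolding B_def by (auto intro!: finite_imageI finite_cartesian_product vset_finite)
  have "vset (Suc m) k = A \<union> B" unfolding A_def B_def by (rule vset_Suc)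
  have dis: "A \<inter> B = {}" unfolding A_def B_def by auto
  have sA: "sum (path_prob K p \<eta>) A = (\<Sum>r\<in>UNIV. \<eta>$r * p$r * prob_F_eq K p (K$r) m k)"
  proof -
    have inj: "inj_on (\<lambda>(r,ys). (r,True)#ys) (UNIV \<times> (vset m k :: ('n \<times> bool) list set))"
      by (auto simp: inj_on_def)
    have "sum (path_prob K p \<eta>) A = (\<Sum>(r,ys)\<in>UNIV \<times> vset m k. path_prob K p \<eta> ((r,True)#ys))"
      unfolding A_def by (subst sum.reindex[OF inj]) (simp add: case_prod_unfold)
    also have "\<dots> = (\<Sum>r\<in>UNIV. \<Sum>ys\<in>vset m k. path_prob K p \<eta> ((r,True)#ys))"
      by (rule sum.cartesian_product[symmetric])
    also have "\<dots> = (\<Sum>r\<in>UNIV. \<eta>$r * p$r * prob_F_eq K p (K$r) m k)"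
      by (simp add: pF_vset tp_pp bern_def sum_distrib_left)
    finally show ?thesis .
  qed
  have sB: "sum (path_prob K p \<eta>) B = (\<Sum>r\<in>UNIV. \<eta>$r * (1 - p$r) * (if k = 0 then 0 else prob_F_eq K p (K$r) (Suc m) (k-1)))"
  proof (cases "k = 0")
    case True thus ?thesis by (simp add: B_def)
  next
    case False
    have inj: "inj_on (\<lambda>(r,ys). (r,False)#ys) (UNIV \<times> (vset (Suc m) (k-1) :: ('n \<times> bool) list set))"
      by (auto simp: inj_on_def)
    have "sum (path_prob K p \<eta>) B = (\<Sum>(r,ys)\<in>UNIV \<times> vset (Suc m) (k-1). path_prob K p \<eta> ((r,False)#ys))"
      unfolding B_def if_not_P[OF False] by (subst sum.reindex[OF inj]) (simp add: case_prod_unfold)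
    also have "\<dots> = (\<Sum>r\<in>UNIV. \<Sum>ys\<in>vset (Suc m) (k-1). path_prob K p \<eta> ((r,False)#ys))"
      by (rule sum.cartesian_product[symmetric])
    also have "\<dots> = (\<Sum>r\<in>UNIV. \<eta>$r * (1 - p$r) * (if k = 0 then 0 else prob_F_eq K p (K$r) (Suc m) (k-1)))"
      using False by (simp add: pF_vset tp_pp bern_def sum_distrib_left)
    finally show ?thesis .
  qed
  have "prob_F_eq K p \<eta> (Suc m) k = sum (path_prob K p \<eta>) A + sum (path_prob K p \<eta>) B"
    unfolding pF_vset \<open>vset (Suc m) k = A \<union> B\<close>
    by (rule sum.union_disjoint[OF fA fB dis])
  also have "\<dots> = (\<Sum>r\<in>UNIV. \<eta>$r * (p$r * prob_F_eq K p (K$r) m k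
      + (1 - p$r) * (if k = 0 then 0 else prob_F_eq K p (K$r) (Suc m) (k-1))))"
    unfolding sA sB sum.distrib[symmetric] by (rule sum.cong) (simp_all add: algebra_simps)
  finally show ?thesis .
qed

lemma tp_nonneg:
  fixes K :: "real^'n^'n"
  assumes "\<forall>i j. K$i$j \<ge> 0" "\<forall>i. 0 \<le> p$i \<and> p$i \<le> 1"
  shows "trans_prob K p r xs \<ge> 0"
  using assms by (induction xs arbitrary: r) (auto simp: bern_def)

lemma pF_nonneg:
  fixes K :: "real^'n^'n"
  assumes "\<forall>i j. K$i$j \<ge> 0" "\<forall>i. 0 \<le> p$i \<and> p$i \<le> 1" "\<forall>i. \<eta>$i \<ge> 0"
  shows "prob_F_eq K p \<eta> m k \<ge> 0"
proof -
  have "path_prob K p \<eta> xs \<ge> 0" for xs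
    using assms tp_nonneg[OF assms(1,2)] by (cases xs) (auto simp: bern_def)
  thus ?thesis unfolding pF_vset by (simp add: sum_nonneg)
qed



lemma pF_sums:
  fixes K :: "real^'n^'n" and w :: "nat \<Rightarrow> real"
  assumes A: "\<And>r. (\<lambda>k. w k * prob_F_eq K p (K$r) m k) sums a r"
    and B: "\<And>r. (\<lambda>k. w (Suc k) * prob_F_eq K p (K$r) (Suc m) k) sums b r"
  shows "(\<lambda>k. w k * prob_F_eq K p \<eta> (Suc m) k) sums (\<Sum>r\<in>UNIV. \<eta>$r * (p$r * a r + (1 - p$r) * b r))"
proof -
  define g where "g r k = w k * (if k = 0 then 0 else prob_F_eq K p (K$r) (Suc m) (k-1))" for r k
  have gs: "g r sums b r" for r
  proof -
    have "(\<lambda>k. g r (Suc k)) sums b r" using B[of r] by (simp add: g_def)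
    hence "g r sums (b r + g r 0)" by (simp only: sums_Suc_iff)
    thus ?thesis by (simp add: g_def)
  qed
  have eq: "w k * prob_F_eq K p \<eta> (Suc m) k
     = (\<Sum>r\<in>UNIV. \<eta>$r * (p$r * (w k * prob_F_eq K p (K$r) m k) + (1 - p$r) * g r k))" for k
    by (subst pF_Suc) (simp add: g_def sum_distrib_left algebra_simps)
  show ?thesis unfolding eq
    by (intro sums_sum sums_mult sums_add A gs)
qed

lemma pF_partial:
  fixes K :: "real^'n^'n" and w :: "nat \<Rightarrow> real"
  shows "(\<Sum>k<Suc N. w k * prob_F_eq K p \<eta> (Suc m) k)
    = (\<Sum>r\<in>UNIV. \<eta>$r * (p$r * (\<Sum>k<Suc N. w k * prob_F_eq K p (K$r) m k)
         + (1 - p$r) * (\<Sum>k<N. w (Suc k) * prob_F_eq K p (K$r) (Suc m) k)))"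
proof -
  define g where "g r k = w k * (if k = 0 then 0 else prob_F_eq K p (K$r) (Suc m) (k-1))" for r k
  have gs: "(\<Sum>k<Suc N. g r k) = (\<Sum>k<N. w (Suc k) * prob_F_eq K p (K$r) (Suc m) k)" for r
    by (subst sum.lessThan_Suc_shift) (simp add: g_def)
  have eq: "w k * prob_F_eq K p \<eta> (Suc m) k
     = (\<Sum>r\<in>UNIV. \<eta>$r * (p$r * (w k * prob_F_eq K p (K$r) m k) + (1 - p$r) * g r k))" for k
    by (subst pF_Suc) (simp add: g_def sum_distrib_left algebra_simps)
  have "(\<Sum>k<Suc N. w k * prob_F_eq K p \<eta> (Suc m) k)
     = (\<Sum>r\<in>UNIV. \<Sum>k<Suc N. \<eta>$r * (p$r * (w k * prob_F_eq K p (K$r) m k) + (1 - p$r) * g r k))"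
    unfolding eq by (rule sum.swap)
  also have "\<dots> = (\<Sum>r\<in>UNIV. \<eta>$r * (p$r * (\<Sum>k<Suc N. w k * prob_F_eq K p (K$r) m k)
         + (1 - p$r) * (\<Sum>k<Suc N. g r k)))"
    by (intro sum.cong refl) (simp add: sum_distrib_left sum.distrib sum_subtractf algebra_simps del: sum.lessThan_Suc)
  finally show ?thesis unfolding gs .
qed

lemma convex_le:
  fixes K :: "real^'n^'n"
  assumes st: "stochastic_matrix K" and le: "\<And>s. f s \<le> c"
  shows "(\<Sum>s\<in>UNIV. K$r$s * f s) \<le> c"
proof -
  have "(\<Sum>s\<in>UNIV. K$r$s * f s) \<le> (\<Sum>s\<in>UNIV. K$r$s * c)"
    using st le by (intro sum_mono mult_left_mono) (auto simp: stochastic_matrix_def)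
  also have "\<dots> = c" using st by (simp add: stochastic_matrix_def sum_distrib_right[symmetric])
  finally show ?thesis .
qed

lemma contr0:
  fixes K :: "real^'n^'n"
  assumes st: "stochastic_matrix K" and pp: "\<forall>i. 0 < p$i \<and> p$i < 1"
    and h: "\<And>r. \<bar>e r\<bar> \<le> (\<Sum>s\<in>UNIV. K$r$s * ((1 - p$s) * \<bar>e s\<bar>))"
  shows "e r = 0"
proof -
  define E where "E = Max (range (\<lambda>s. \<bar>e s\<bar>))"
  have ge: "\<bar>e s\<bar> \<le> E" for s unfolding E_def by (simp add: Max_ge)
  have "E \<in> range (\<lambda>s. \<bar>e s\<bar>)" unfolding E_def by (rule Max_in) auto
  then obtain r0 where r0: "\<bar>e r0\<bar> = E" by auto
  have nn: "\<And>i j. K$i$j \<ge> 0" and rs: "\<And>i. (\<Sum>j\<in>UNIV. K$i$j) = 1"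
    using st by (auto simp: stochastic_matrix_def)
  obtain j where kj: "K$r0$j > 0"
  proof -
    have "\<exists>j. K$r0$j > 0"
    proof (rule ccontr)
      assume "\<not> ?thesis"
      hence "\<forall>j. K$r0$j = 0" using nn by (meson antisym not_less)
      hence "(\<Sum>j\<in>UNIV. K$r0$j) = 0" by simp
      thus False using rs by simp
    qed
    thus ?thesis using that by blast
  qed
  have "E \<le> (\<Sum>s\<in>UNIV. K$r0$s * ((1 - p$s) * E))"
    using h[of r0] r0 ge pp nn
    by (smt (verit) mult_left_mono sum_mono)
  also have "\<dots> = E * (\<Sum>s\<in>UNIV. K$r0$s) - E * (\<Sum>s\<in>UNIV. K$r0$s * p$s)"
    by (simp add: algebra_simps sum_subtractf sum_distrib_left)
  also have "\<dots> = E * (1 - (\<Sum>s\<in>UNIV. K$r0$s * p$s))"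
    using rs[of r0] by (simp add: algebra_simps)
  finally have "E * (\<Sum>s\<in>UNIV. K$r0$s * p$s) \<le> 0" by (simp add: algebra_simps)
  moreover have "(\<Sum>s\<in>UNIV. K$r0$s * p$s) > 0"
  proof -
    have "K$r0$j * p$j > 0" using kj pp by simp
    moreover have "K$r0$j * p$j \<le> (\<Sum>s\<in>UNIV. K$r0$s * p$s)"
      using nn pp by (intro member_le_sum) (auto intro!: mult_nonneg_nonneg simp: less_imp_le)
    ultimately show ?thesis by linarith
  qed
  ultimately have "E \<le> 0" by (simp add: mult_le_0_iff)
  thus ?thesis using ge[of r] by simp
qed



context
  fixes K :: "real^'n^'n" and p :: "real^'n"
  assumes st: "stochastic_matrix K" and pp: "\<forall>i. 0 < p$i \<and> p$i < 1"
begin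

lemma Qnn: "prob_F_eq K p (K$r) m k \<ge> 0"
  using st pp by (intro pF_nonneg) (auto simp: stochastic_matrix_def less_imp_le)

lemma Knn: "K$i$j \<ge> 0" and Krs: "(\<Sum>j\<in>UNIV. K$i$j) = 1"
  using st by (auto simp: stochastic_matrix_def)

lemma summ_step:
  assumes IH: "\<And>r. summable (\<lambda>k. prob_F_eq K p (K$r) m k) \<and> suminf (\<lambda>k. prob_F_eq K p (K$r) m k) = 1
      \<and> summable (\<lambda>k. real k * prob_F_eq K p (K$r) m k)"
  shows "summable (\<lambda>k. prob_F_eq K p (K$r) (Suc m) k) \<and> suminf (\<lambda>k. prob_F_eq K p (K$r) (Suc m) k) = 1
      \<and> summable (\<lambda>k. real k * prob_F_eq K p (K$r) (Suc m) k)"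
proof -
  let ?Q = "\<lambda>r m k. prob_F_eq K p (K$r) m k"
  have pm: "(\<Sum>k<N. ?Q s m k) \<le> 1" for s N
    using sum_le_suminf[of "?Q s m" "{..<N}"] IH[of s] Qnn by simp
  have b1: "\<forall>r. (\<Sum>k<N. ?Q r (Suc m) k) \<le> 1" for N
  proof (induction N)
    case 0 show ?case by simp
  next
    case (Suc N)
    show ?case
    proof
      fix r
      have "(\<Sum>k<Suc N. ?Q r (Suc m) k) = (\<Sum>k<Suc N. 1 * ?Q r (Suc m) k)" by simp
      also have "\<dots> = (\<Sum>s\<in>UNIV. K$r$s * (p$s * (\<Sum>k<Suc N. 1 * ?Q s m k)
         + (1 - p$s) * (\<Sum>k<N. 1 * ?Q s (Suc m) k)))"
        by (rule pF_partial)
      also have "\<dots> \<le> 1"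
      proof (rule convex_le[OF st])
        fix s
        have "p$s * (\<Sum>k<Suc N. 1 * ?Q s m k) \<le> p$s * 1"
          using pm[of s "Suc N"] pp by (intro mult_left_mono) (auto simp: less_imp_le)
        moreover have "(1 - p$s) * (\<Sum>k<N. 1 * ?Q s (Suc m) k) \<le> (1 - p$s) * 1"
          using Suc.IH pp by (intro mult_left_mono) (auto simp: less_imp_le)
        ultimately show "p$s * (\<Sum>k<Suc N. 1 * ?Q s m k) + (1 - p$s) * (\<Sum>k<N. 1 * ?Q s (Suc m) k) \<le> 1"
          by simp
      qed
      finally show "(\<Sum>k<Suc N. ?Q r (Suc m) k) \<le> 1" .
    qed
  qed
  have sQ: "summable (?Q r (Suc m))" for r
    by (rule bounded_imp_summable[of _ 1]) (use Qnn b1 in \<open>auto simp: lessThan_Suc_atMost[symmetric] simp del: sum.lessThan_Suc\<close>)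
  define u where "u r = suminf (?Q r (Suc m))" for r
  have u_eq: "u r = (\<Sum>s\<in>UNIV. K$r$s * (p$s * 1 + (1 - p$s) * u s))" for r
  proof -
    have "(\<lambda>k. 1 * ?Q r (Suc m) k) sums (\<Sum>s\<in>UNIV. K$r$s * (p$s * 1 + (1 - p$s) * u s))"
    proof (rule pF_sums[where w="\<lambda>_. 1"])
      show "(\<lambda>k. 1 * ?Q s m k) sums 1" for s using IH[of s] by (simp add: sums_iff)
      show "(\<lambda>k. 1 * ?Q s (Suc m) k) sums u s" for s using sQ[of s] by (simp add: u_def sums_iff)
    qed
    thus ?thesis by (simp add: u_def sums_iff)
  qed
  have u1: "u r = 1" for r
  proof -
    have "1 - u r = 0"
    proof (rule contr0[OF st pp, of "\<lambda>r. 1 - u r"])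
      fix r
      have "1 - u r = (\<Sum>s\<in>UNIV. K$r$s * ((1 - p$s) * (1 - u s)))"
        using u_eq[of r] Krs[of r]
        by (simp add: algebra_simps sum_subtractf sum.distrib sum_distrib_left)
      also have "\<bar>\<dots>\<bar> \<le> (\<Sum>s\<in>UNIV. \<bar>K$r$s * ((1 - p$s) * (1 - u s))\<bar>)" by (rule sum_abs)
      also have "\<dots> = (\<Sum>s\<in>UNIV. K$r$s * ((1 - p$s) * \<bar>1 - u s\<bar>))"
        using Knn pp by (intro sum.cong refl) (simp add: abs_mult less_imp_le)
      finally show "\<bar>1 - u r\<bar> \<le> (\<Sum>s\<in>UNIV. K$r$s * ((1 - p$s) * \<bar>1 - u s\<bar>))" .
    qed
    thus ?thesis by simp
  qed
  define G where "G = (\<Sum>s\<in>UNIV. suminf (\<lambda>k. real k * ?Q s m k))"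
  define c where "c = G + (\<Sum>s\<in>UNIV. 1 / p$s)"
  have Gs: "suminf (\<lambda>k. real k * ?Q s m k) \<le> G" for s
    unfolding G_def using IH Qnn
    by (intro member_le_sum) (auto intro!: suminf_nonneg)
  have inv_ge: "1 / p$s \<le> (\<Sum>s\<in>UNIV. 1 / p$s)" for s
    using pp by (intro member_le_sum) (auto simp: less_imp_le)
  have pmk: "(\<Sum>k<N. real k * ?Q s m k) \<le> G" for s N
    using sum_le_suminf[of "\<lambda>k. real k * ?Q s m k" "{..<N}"] IH[of s] Qnn Gs[of s] by simp
  have b2: "\<forall>r. (\<Sum>k<N. real k * ?Q r (Suc m) k) \<le> c" for N
  proof (induction N)
    case 0
    have "0 \<le> G" unfolding G_def using IH Qnn by (intro sum_nonneg suminf_nonneg) auto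
    moreover have "0 \<le> (\<Sum>s\<in>UNIV. 1 / p$s)" using pp by (intro sum_nonneg) (simp add: less_imp_le)
    ultimately show ?case by (simp add: c_def)
  next
    case (Suc N)
    show ?case
    proof
      fix r
      have "(\<Sum>k<Suc N. real k * ?Q r (Suc m) k) = (\<Sum>s\<in>UNIV. K$r$s * (p$s * (\<Sum>k<Suc N. real k * ?Q s m k)
         + (1 - p$s) * (\<Sum>k<N. real (Suc k) * ?Q s (Suc m) k)))"
        by (rule pF_partial)
      also have "\<dots> \<le> c"
      proof (rule convex_le[OF st])
        fix s
        have ps: "0 < p$s" "p$s < 1" using pp by auto
        have "(\<Sum>k<N. real (Suc k) * ?Q s (Suc m) k) = (\<Sum>k<N. real k * ?Q s (Suc m) k) + (\<Sum>k<N. ?Q s (Suc m) k)"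
          by (simp add: algebra_simps sum.distrib)
        also have "\<dots> \<le> c + 1" using Suc.IH b1 by (intro add_mono) auto
        finally have a1: "(\<Sum>k<N. real (Suc k) * ?Q s (Suc m) k) \<le> c + 1" .
        have "p$s * (\<Sum>k<Suc N. real k * ?Q s m k) + (1 - p$s) * (\<Sum>k<N. real (Suc k) * ?Q s (Suc m) k)
            \<le> p$s * G + (1 - p$s) * (c + 1)"
          using pmk[of s "Suc N"] a1 ps by (intro add_mono mult_left_mono) auto
        also have "\<dots> \<le> c"
        proof -
          have "1 / p$s \<le> c - G" using inv_ge[of s] by (simp add: c_def)
          hence "1 \<le> p$s * (c - G)" using ps by (simp add: field_simps)
          thus ?thesis using ps by (simp add: algebra_simps)
        qed
        finally show "p$s * (\<Sum>k<Suc N. real k * ?Q s m k) + (1 - p$s) * (\<Sum>k<N. real (Suc k) * ?Q s (Suc m) k) \<le> c" .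
      qed
      finally show "(\<Sum>k<Suc N. real k * ?Q r (Suc m) k) \<le> c" .
    qed
  qed
  have "summable (\<lambda>k. real k * ?Q r (Suc m) k)"
    by (rule bounded_imp_summable[of _ c]) (use Qnn b2 in \<open>auto simp: lessThan_Suc_atMost[symmetric] simp del: sum.lessThan_Suc\<close>)
  thus ?thesis using sQ u1 by (simp add: u_def)
qed

lemma summ_all:
  "summable (\<lambda>k. prob_F_eq K p (K$r) m k) \<and> suminf (\<lambda>k. prob_F_eq K p (K$r) m k) = 1
      \<and> summable (\<lambda>k. real k * prob_F_eq K p (K$r) m k)"
proof (induction m arbitrary: r)
  case 0
  have e: "prob_F_eq K p (K$r) 0 = (\<lambda>k. if k = 0 then 1 else 0)" by (simp add: pF_0 fun_eq_iff)
  have "(\<lambda>k. if k = 0 then 1 else 0::real) sums 1" using sums_single[of 0 "\<lambda>_. 1::real"] by simp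
  moreover have "(\<lambda>k. real k * (if k = 0 then 1 else 0)) = (\<lambda>k. 0::real)" by auto
  ultimately show ?case unfolding e by (auto simp: sums_iff)
next
  case (Suc m)
  show ?case by (rule summ_step) (use Suc in auto)
qed

end



context
  fixes K :: "real^'n^'n" and p :: "real^'n"
  assumes st: "stochastic_matrix K" and pp: "\<forall>i. 0 < p$i \<and> p$i < 1"
begin

lemma E_Suc:
  "expect_F K p \<eta> (Suc m) = (\<Sum>r\<in>UNIV. \<eta>$r * (p$r * expect_F K p (K$r) m
       + (1 - p$r) * (expect_F K p (K$r) (Suc m) + 1)))"
proof -
  have "(\<lambda>k. real k * prob_F_eq K p \<eta> (Suc m) k) sums (\<Sum>r\<in>UNIV. \<eta>$r * (p$r * expect_F K p (K$r) m
       + (1 - p$r) * (expect_F K p (K$r) (Suc m) + 1)))"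
  proof (rule pF_sums[where w=real])
    show "(\<lambda>k. real k * prob_F_eq K p (K$r) m k) sums expect_F K p (K$r) m" for r
      using summ_all[OF st pp, of r m] by (simp add: expect_F_def summable_sums)
    show "(\<lambda>k. real (Suc k) * prob_F_eq K p (K$r) (Suc m) k) sums (expect_F K p (K$r) (Suc m) + 1)" for r
    proof -
      have "(\<lambda>k. real k * prob_F_eq K p (K$r) (Suc m) k + prob_F_eq K p (K$r) (Suc m) k)
          sums (expect_F K p (K$r) (Suc m) + 1)"
        using summ_all[OF st pp, of r "Suc m"]
        by (intro sums_add) (auto simp: expect_F_def sums_iff)
      thus ?thesis by (simp add: algebra_simps)
    qed
  qed
  thus ?thesis by (simp add: expect_F_def sums_iff)
qed

lemma E_0: "expect_F K p \<eta> 0 = 0"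
proof -
  have "(\<lambda>k. real k * prob_F_eq K p \<eta> 0 k) = (\<lambda>k. 0)" by (auto simp: pF_0)
  thus ?thesis by (simp add: expect_F_def)
qed

definition fv :: "nat \<Rightarrow> 'n \<Rightarrow> real" where
  "fv m s = (if m = 0 then 0 else p$s * expect_F K p (K$s) (m-1) + (1 - p$s) * (expect_F K p (K$s) m + 1))"

lemma E_fv: "expect_F K p \<eta> (Suc m) = (\<Sum>r\<in>UNIV. \<eta>$r * fv (Suc m) r)"
  by (subst E_Suc) (simp add: fv_def)

lemma G_fv: "expect_F K p (K$r) m = (\<Sum>s\<in>UNIV. K$r$s * fv m s)"
proof (cases m)
  case 0 thus ?thesis by (simp add: E_0 fv_def)
next
  case (Suc m') thus ?thesis by (simp add: E_fv)
qed

lemma fv_rec: "fv (Suc m) s = p$s * (\<Sum>j\<in>UNIV. K$s$j * fv m j) + (1 - p$s) * ((\<Sum>j\<in>UNIV. K$s$j * fv (Suc m) j) + 1)"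
  unfolding G_fv[symmetric] by (simp add: fv_def)

lemma fv_0: "fv 0 s = 0" by (simp add: fv_def)

end



lemma convex_ge:
  fixes K :: "real^'n^'n"
  assumes st: "stochastic_matrix K" and le: "\<And>s. c \<le> f s"
  shows "c \<le> (\<Sum>s\<in>UNIV. K$r$s * f s)"
proof -
  have "(\<Sum>s\<in>UNIV. K$r$s * c) \<le> (\<Sum>s\<in>UNIV. K$r$s * f s)"
    using st le by (intro sum_mono mult_left_mono) (auto simp: stochastic_matrix_def)
  moreover have "(\<Sum>s\<in>UNIV. K$r$s * c) = c" using st by (simp add: stochastic_matrix_def sum_distrib_right[symmetric])
  ultimately show ?thesis by simp
qed

context
  fixes K :: "real^'n^'n" and p :: "real^'n"
  assumes st: "stochastic_matrix K" and pp: "\<forall>i. 0 < p$i \<and> p$i < 1"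
begin

definition eqz :: "('n \<Rightarrow> real) \<Rightarrow> ('n \<Rightarrow> real) \<Rightarrow> bool" where
  "eqz z w \<longleftrightarrow> (\<forall>j. z j = (1 - p$j) * (\<Sum>l\<in>UNIV. K$j$l * z l) + p$j * (\<Sum>l\<in>UNIV. K$j$l * w l))"

lemma z_nonneg:
  assumes e: "eqz z w" and w: "\<And>j. 0 \<le> w j"
  shows "0 \<le> z i"
proof -
  define m0 where "m0 = Min (range z)"
  have ge: "m0 \<le> z j" for j unfolding m0_def by simp
  have "m0 \<in> range z" unfolding m0_def by (rule Min_in) auto
  then obtain i0 where i0: "z i0 = m0" by auto
  have a: "m0 \<le> (\<Sum>l\<in>UNIV. K$i0$l * z l)" by (rule convex_ge[OF st ge])
  have b: "0 \<le> (\<Sum>l\<in>UNIV. K$i0$l * w l)" by (rule convex_ge[OF st w])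
  have p0: "0 < p$i0" "p$i0 < 1" using pp by auto
  have "m0 = (1 - p$i0) * (\<Sum>l\<in>UNIV. K$i0$l * z l) + p$i0 * (\<Sum>l\<in>UNIV. K$i0$l * w l)"
    using e i0 unfolding eqz_def by metis
  also have "\<dots> \<ge> (1 - p$i0) * m0 + p$i0 * 0"
    using a b p0 by (intro add_mono mult_left_mono) auto
  finally have "p$i0 * m0 \<ge> 0" by (simp add: algebra_simps)
  hence "m0 \<ge> 0" using p0 by (simp add: zero_le_mult_iff)
  thus ?thesis using ge[of i] by simp
qed

lemma doeb_path:
  assumes "(i, s0) \<in> (step_rel K)\<^sup>+"
  shows "\<exists>c>0. \<forall>z w. (\<forall>j. 0 \<le> w j) \<longrightarrow> eqz z w \<longrightarrow> c * w s0 \<le> z i"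
  using assms
proof (induction rule: converse_trancl_induct)
  case (base i)
  hence k: "K$i$s0 > 0" by (simp add: step_rel_def)
  have pi: "0 < p$i" "p$i < 1" using pp by auto
  show ?case
  proof (intro exI[of _ "p$i * K$i$s0"] conjI allI impI)
    show "0 < p$i * K$i$s0" using k pi by simp
    fix z w assume w: "\<forall>j. 0 \<le> w j" and e: "eqz z w"
    have zn: "\<And>j. 0 \<le> z j" using z_nonneg[OF e] w by blast
    have "K$i$s0 * w s0 \<le> (\<Sum>l\<in>UNIV. K$i$l * w l)"
      using w Knn[OF st pp] by (intro member_le_sum) auto
    moreover have "0 \<le> (\<Sum>l\<in>UNIV. K$i$l * z l)" using zn by (intro convex_ge[OF st]) auto
    moreover have "z i = (1 - p$i) * (\<Sum>l\<in>UNIV. K$i$l * z l) + p$i * (\<Sum>l\<in>UNIV. K$i$l * w l)"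
      using e unfolding eqz_def by metis
    ultimately show "p$i * K$i$s0 * w s0 \<le> z i" using pi
      by (smt (verit, best) mult.assoc mult_left_mono mult_nonneg_nonneg)
  qed
next
  case (step i j)
  then obtain c where c: "c > 0" and cj: "\<forall>z w. (\<forall>j. 0 \<le> w j) \<longrightarrow> eqz z w \<longrightarrow> c * w s0 \<le> z j" by blast
  have k: "K$i$j > 0" using step by (simp add: step_rel_def)
  have pi: "0 < p$i" "p$i < 1" using pp by auto
  show ?case
  proof (intro exI[of _ "(1 - p$i) * K$i$j * c"] conjI allI impI)
    show "0 < (1 - p$i) * K$i$j * c" using k pi c by simp
    fix z w assume w: "\<forall>j. 0 \<le> w j" and e: "eqz z w"
    have zn: "\<And>j. 0 \<le> z j" using z_nonneg[OF e] w by blast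
    have zj: "c * w s0 \<le> z j" using cj w e by blast
    have "K$i$j * z j \<le> (\<Sum>l\<in>UNIV. K$i$l * z l)"
      using zn Knn[OF st pp] by (intro member_le_sum) auto
    moreover have "0 \<le> (\<Sum>l\<in>UNIV. K$i$l * w l)" using w by (intro convex_ge[OF st]) auto
    moreover have "z i = (1 - p$i) * (\<Sum>l\<in>UNIV. K$i$l * z l) + p$i * (\<Sum>l\<in>UNIV. K$i$l * w l)"
      using e unfolding eqz_def by metis
    moreover have "K$i$j * (c * w s0) \<le> K$i$j * z j" using zj k by simp
    ultimately show "(1 - p$i) * K$i$j * c * w s0 \<le> z i" using pi
      by (smt (verit, best) mult.assoc mult_left_mono mult_nonneg_nonneg)
  qed
qed

lemma doeb_unif:
  assumes s0: "\<forall>i. (i, s0) \<in> (step_rel K)\<^sup>+"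
  shows "\<exists>\<delta>>0. \<delta> \<le> 1/2 \<and> (\<forall>z w i. (\<forall>j. 0 \<le> w j) \<longrightarrow> eqz z w \<longrightarrow> \<delta> * w s0 \<le> z i)"
proof -
  have "\<forall>i. \<exists>c>0. \<forall>z w. (\<forall>j. 0 \<le> w j) \<longrightarrow> eqz z w \<longrightarrow> c * w s0 \<le> z i"
    using doeb_path s0 by blast
  then obtain c where c: "\<And>i. c i > 0"
    and ci: "\<And>i z w. (\<forall>j. 0 \<le> w j) \<Longrightarrow> eqz z w \<Longrightarrow> c i * w s0 \<le> z i" by metis
  define \<delta> where "\<delta> = min (Min (range c)) (1/2)"
  have "Min (range c) \<in> range c" by (rule Min_in) auto
  hence mpos: "Min (range c) > 0" using c by auto
  show ?thesis
  proof (intro exI[of _ \<delta>] conjI allI impI)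
    show "0 < \<delta>" "\<delta> \<le> 1/2" using mpos by (auto simp: \<delta>_def)
    fix z w i assume w: "\<forall>j. 0 \<le> w j" and e: "eqz z w"
    have "\<delta> \<le> c i" unfolding \<delta>_def by (simp add: min.coboundedI1)
    hence "\<delta> * w s0 \<le> c i * w s0" using w by (simp add: mult_right_mono)
    thus "\<delta> * w s0 \<le> z i" using ci[of w z i, OF w e] by linarith
  qed
qed

lemma osc_contract:
  assumes \<delta>: "\<forall>z w i. (\<forall>j. 0 \<le> w j) \<longrightarrow> eqz z w \<longrightarrow> \<delta> * w s0 \<le> z i"
    and e: "eqz y x" and B: "\<And>i j. x i - x j \<le> B" and d1: "\<delta> \<le> 1"
  shows "y i - y j \<le> (1 - \<delta>) * B"
proof -
  define M where "M = Max (range x)"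
  define n where "n = Min (range x)"
  have Mge: "x k \<le> M" for k unfolding M_def by simp
  have nle: "n \<le> x k" for k unfolding n_def by simp
  have "M \<in> range x" unfolding M_def by (rule Max_in) auto
  moreover have "n \<in> range x" unfolding n_def by (rule Min_in) auto
  ultimately have MnB: "M - n \<le> B" using B by auto
  have rsK: "\<And>i. (\<Sum>l\<in>UNIV. K$i$l) = 1" using Krs[OF st pp] .
  have lin: "(\<Sum>l\<in>UNIV. K$i$l * (a * f l + b)) = a * (\<Sum>l\<in>UNIV. K$i$l * f l) + b" for i a b and f :: "'n \<Rightarrow> real"
  proof -
    have "(\<Sum>l\<in>UNIV. K$i$l * (a * f l + b)) = a * (\<Sum>l\<in>UNIV. K$i$l * f l) + b * (\<Sum>l\<in>UNIV. K$i$l)"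
      by (simp add: algebra_simps sum.distrib sum_distrib_left)
    thus ?thesis using rsK by simp
  qed
  have e1: "eqz (\<lambda>k. y k - n) (\<lambda>k. x k - n)"
    unfolding eqz_def
  proof
    fix k
    have "y k = (1 - p$k) * (\<Sum>l\<in>UNIV. K$k$l * y l) + p$k * (\<Sum>l\<in>UNIV. K$k$l * x l)"
      using e unfolding eqz_def by metis
    moreover have "(\<Sum>l\<in>UNIV. K$k$l * (y l - n)) = (\<Sum>l\<in>UNIV. K$k$l * y l) - n"
      using lin[of k 1 y "-n"] by simp
    moreover have "(\<Sum>l\<in>UNIV. K$k$l * (x l - n)) = (\<Sum>l\<in>UNIV. K$k$l * x l) - n"
      using lin[of k 1 x "-n"] by simp
    moreover have "\<And>(yk::real) a SY SX SY' SX'. yk = (1 - a) * SY + a * SX \<Longrightarrow> SY' = SY - n \<Longrightarrow> SX' = SX - n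
       \<Longrightarrow> yk - n = (1 - a) * SY' + a * SX'" by (hypsubst, simp add: algebra_simps)
    ultimately show "y k - n = (1 - p$k) * (\<Sum>l\<in>UNIV. K$k$l * (y l - n)) + p$k * (\<Sum>l\<in>UNIV. K$k$l * (x l - n))"
      by blast
  qed
  have e2: "eqz (\<lambda>k. M - y k) (\<lambda>k. M - x k)"
    unfolding eqz_def
  proof
    fix k
    have "y k = (1 - p$k) * (\<Sum>l\<in>UNIV. K$k$l * y l) + p$k * (\<Sum>l\<in>UNIV. K$k$l * x l)"
      using e unfolding eqz_def by metis
    moreover have "(\<Sum>l\<in>UNIV. K$k$l * (M - y l)) = M - (\<Sum>l\<in>UNIV. K$k$l * y l)"
      using lin[of k "-1" y M] by simp
    moreover have "(\<Sum>l\<in>UNIV. K$k$l * (M - x l)) = M - (\<Sum>l\<in>UNIV. K$k$l * x l)"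
      using lin[of k "-1" x M] by simp
    moreover have "\<And>(yk::real) a SY SX SY' SX'. yk = (1 - a) * SY + a * SX \<Longrightarrow> SY' = M - SY \<Longrightarrow> SX' = M - SX
       \<Longrightarrow> M - yk = (1 - a) * SY' + a * SX'" by (hypsubst, simp add: algebra_simps)
    ultimately show "M - y k = (1 - p$k) * (\<Sum>l\<in>UNIV. K$k$l * (M - y l)) + p$k * (\<Sum>l\<in>UNIV. K$k$l * (M - x l))"
      by blast
  qed
  have "\<delta> * (x s0 - n) \<le> y j - n" using \<delta>[rule_format, of "\<lambda>k. x k - n" "\<lambda>k. y k - n" j] e1 nle by simp
  moreover have "\<delta> * (M - x s0) \<le> M - y i" using \<delta>[rule_format, of "\<lambda>k. M - x k" "\<lambda>k. M - y k" i] e2 Mge by simp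
  ultimately have "y i - y j \<le> (1 - \<delta>) * (M - n)" by (simp add: algebra_simps)
  moreover have "(1 - \<delta>) * (M - n) \<le> (1 - \<delta>) * B" using MnB d1 by (intro mult_left_mono) auto
  ultimately show ?thesis by linarith
qed

end



lemma ell_swap:
  fixes K :: "real^'n^'n"
  shows "(\<Sum>j\<in>UNIV. (\<Sum>l\<in>UNIV. \<mu>$l * p$l * K$l$j) * x j) = (\<Sum>l\<in>UNIV. \<mu>$l * p$l * (\<Sum>j\<in>UNIV. K$l$j * x j))"
  by (simp add: sum_distrib_left sum_distrib_right mult.assoc mult.left_commute) (rule sum.swap)

lemma sign_exists:
  fixes y lw :: "'n::finite \<Rightarrow> real"
  assumes nn: "\<And>j. 0 \<le> lw j" and pos: "(\<Sum>j\<in>UNIV. lw j) > 0" and z: "(\<Sum>j\<in>UNIV. lw j * y j) = 0"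
  shows "\<exists>j. y j \<le> 0"
proof (rule ccontr)
  assume "\<not> ?thesis"
  hence yp: "\<And>j. y j > 0" by (meson not_le)
  obtain j where "lw j > 0"
  proof (rule ccontr)
    assume "\<not> thesis"
    hence "\<And>j. lw j \<le> 0" using that by (meson not_le)
    hence "(\<Sum>j\<in>UNIV. lw j) \<le> 0" by (simp add: sum_nonpos)
    thus False using pos by simp
  qed
  have "0 < (\<Sum>j\<in>UNIV. lw j * y j)"
  proof (rule sum_pos2[where i=j])
    show "0 < lw j * y j" using \<open>lw j > 0\<close> yp[of j] by simp
    show "\<And>i. i \<in> UNIV \<Longrightarrow> 0 \<le> lw i * y i" using nn yp by (simp add: less_imp_le)
  qed simp_all
  thus False using z by simp
qed



theorem proposition4p1:
  fixes K :: "real^'n^'n" and \<mu> p :: "real^'n"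
  assumes "stochastic_matrix K"
    and "unique_closed_irreducible K"
    and "stationary_dist K \<mu>"
    and "\<forall>i. 0 < p$i \<and> p$i < 1"
    and "\<mu> \<bullet> p = 1/2"
  shows "(\<forall>\<eta>. prob_vector \<eta> \<longrightarrow>
            ((\<lambda>n. expect_F K p \<eta> (n + 1) / real n) \<longlonglongrightarrow> 1))
       \<and> (\<exists>c1 c2. c1 > 0 \<and> c2 > 0 \<and>
            (\<forall>n::nat. \<forall>\<eta>. prob_vector \<eta> \<longrightarrow>
               \<bar>expect_F K p \<eta> (n + 1) - real n - (1 + \<eta> \<bullet> r_tilde K p \<mu>)\<bar>
                 \<le> c1 * exp (- c2 * real n)))"
proof -
  note st = assms(1) and pp = assms(4) and half = assms(5)
  have statK: "\<mu> v* K = \<mu>" and pm: "(\<Sum>i\<in>UNIV. \<mu>$i) = 1"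
    using assms(3) by (auto simp: stationary_dist_def prob_vector_def)
  obtain s0 where s0tr: "\<forall>i. (i,s0) \<in> (step_rel K)\<^sup>+"
    and s0cl: "\<forall>S. closed_set K S \<and> S \<noteq> {} \<longrightarrow> s0 \<in> S"
    using uci_s0[OF st assms(2)] by blast
  define rt where "rt = r_tilde K p \<mu>"
  have R: "\<And>i. rt$i - (\<Sum>j\<in>UNIV. K$i$j * rt$j) = 1 - 2 * p$i"
    using rt_props(1)[OF st statK pm s0cl half] unfolding rt_def by blast
  have L: "(\<Sum>j\<in>UNIV. (\<Sum>l\<in>UNIV. \<mu>$l * p$l * K$l$j) * rt$j) = 0"
    using rt_props(2)[OF st statK pm s0cl half] unfolding rt_def .
  define d where "d m s = fv K p m s - real m - rt$s" for m s
  have rsK: "\<And>i. (\<Sum>l\<in>UNIV. K$i$l) = 1" using Krs[OF st pp] .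
  have Kd: "(\<Sum>l\<in>UNIV. K$j$l * d m l) = (\<Sum>l\<in>UNIV. K$j$l * fv K p m l) - real m - (\<Sum>l\<in>UNIV. K$j$l * rt$l)" for j m
  proof -
    have "(\<Sum>l\<in>UNIV. K$j$l * d m l) = (\<Sum>l\<in>UNIV. K$j$l * fv K p m l) - real m * (\<Sum>l\<in>UNIV. K$j$l) - (\<Sum>l\<in>UNIV. K$j$l * rt$l)"
      unfolding d_def by (simp add: algebra_simps sum_subtractf sum_distrib_left sum.distrib)
    thus ?thesis using rsK by simp
  qed
  have D1: "eqz K p (d (Suc m)) (d m)" for m
    unfolding eqz_def[OF st pp]
  proof
    fix j
    have alg: "\<And>(fvS::real) a A B dS A' B' r R' mm m1. fvS = a * A + (1 - a) * (B + 1)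
       \<Longrightarrow> dS = fvS - m1 - r \<Longrightarrow> A' = A - mm - R' \<Longrightarrow> B' = B - m1 - R' \<Longrightarrow> r - R' = 1 - 2 * a
       \<Longrightarrow> m1 = mm + 1 \<Longrightarrow> dS = (1 - a) * B' + a * A'"
      by (hypsubst, simp add: algebra_simps)
    have dS: "d (Suc m) j = fv K p (Suc m) j - real (Suc m) - rt$j" by (simp add: d_def)
    show "d (Suc m) j = (1 - p$j) * (\<Sum>l\<in>UNIV. K$j$l * d (Suc m) l) + p$j * (\<Sum>l\<in>UNIV. K$j$l * d m l)"
      by (rule alg[OF fv_rec[OF st pp, of m j] dS Kd[of j m] Kd[of j "Suc m"] R[of j]]) simp
  qed
  define Lf where "Lf x = (\<Sum>l\<in>UNIV. \<mu>$l * p$l * (\<Sum>j\<in>UNIV. K$l$j * x j))" for x :: "'n \<Rightarrow> real"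
  have D2: "Lf (d m) = 0" for m
  proof (induction m)
    case 0
    have "Lf (d 0) = (\<Sum>j\<in>UNIV. (\<Sum>l\<in>UNIV. \<mu>$l * p$l * K$l$j) * d 0 j)"
      unfolding Lf_def by (rule ell_swap[symmetric])
    also have "\<dots> = - (\<Sum>j\<in>UNIV. (\<Sum>l\<in>UNIV. \<mu>$l * p$l * K$l$j) * rt$j)"
      by (simp add: d_def fv_0[OF st pp] sum_negf)
    finally show ?case using L by simp
  next
    case (Suc m)
    let ?y = "d (Suc m)" and ?x = "d m"
    have e: "\<And>i. ?y i = (1 - p$i) * (\<Sum>l\<in>UNIV. K$i$l * ?y l) + p$i * (\<Sum>l\<in>UNIV. K$i$l * ?x l)"
      using D1[of m] unfolding eqz_def[OF st pp] by blast
    have "(\<Sum>i\<in>UNIV. \<mu>$i * ?y i) = (\<Sum>i\<in>UNIV. \<mu>$i * (1 - p$i) * (\<Sum>l\<in>UNIV. K$i$l * ?y l)) + Lf ?x"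
      unfolding Lf_def by (subst e) (simp add: algebra_simps sum.distrib sum_subtractf)
    moreover have "(\<Sum>i\<in>UNIV. \<mu>$i * (\<Sum>l\<in>UNIV. K$i$l * ?y l)) = (\<Sum>i\<in>UNIV. \<mu>$i * ?y i)"
      using Kmean_swap[OF statK, of "\<chi> i. ?y i"] by simp
    moreover have "(\<Sum>i\<in>UNIV. \<mu>$i * (\<Sum>l\<in>UNIV. K$i$l * ?y l))
        = (\<Sum>i\<in>UNIV. \<mu>$i * (1 - p$i) * (\<Sum>l\<in>UNIV. K$i$l * ?y l)) + Lf ?y"
      unfolding Lf_def by (simp add: algebra_simps sum.distrib sum_subtractf)
    ultimately show ?case using Suc.IH by simp
  qed
  have lnn: "\<And>j. 0 \<le> (\<Sum>l\<in>UNIV. \<mu>$l * p$l * K$l$j)"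
    using assms(3) pp Knn[OF st pp]
    by (intro sum_nonneg) (auto simp: stationary_dist_def prob_vector_def less_imp_le)
  have lpos: "0 < (\<Sum>j\<in>UNIV. (\<Sum>l\<in>UNIV. \<mu>$l * p$l * K$l$j))"
    using ell_sum[OF st, of \<mu> p] half mu_p[of \<mu> p] by simp
  have D3: "(\<exists>j. d m j \<le> 0) \<and> (\<exists>k. 0 \<le> d m k)" for m
  proof
    have z: "(\<Sum>j\<in>UNIV. (\<Sum>l\<in>UNIV. \<mu>$l * p$l * K$l$j) * d m j) = 0"
      using D2[of m] unfolding Lf_def ell_swap .
    show "\<exists>j. d m j \<le> 0" by (rule sign_exists[OF lnn lpos z])
    have "(\<Sum>j\<in>UNIV. (\<Sum>l\<in>UNIV. \<mu>$l * p$l * K$l$j) * (- d m j)) = 0"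
      using z by (simp add: sum_negf)
    from sign_exists[OF lnn lpos this] show "\<exists>k. 0 \<le> d m k" by auto
  qed
  obtain \<delta> where dpos: "\<delta> > 0" and dle: "\<delta> \<le> 1/2"
    and dU: "\<forall>z w i. (\<forall>j. 0 \<le> w j) \<longrightarrow> eqz K p z w \<longrightarrow> \<delta> * w s0 \<le> z i"
    using doeb_unif[OF st pp s0tr] by blast
  define q where "q = 1 - \<delta>"
  have q: "1/2 \<le> q" "q < 1" using dpos dle by (auto simp: q_def)
  define B0 where "B0 = 2 * (\<Sum>i\<in>UNIV. \<bar>rt$i\<bar>)"
  have B0nn: "0 \<le> B0" unfolding B0_def by (simp add: sum_nonneg)
  have D6: "\<forall>i j. d m i - d m j \<le> q ^ m * B0" for m
  proof (induction m)
    case 0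
    show ?case
    proof (intro allI)
      fix i j
      have "\<bar>rt$i\<bar> \<le> (\<Sum>i\<in>UNIV. \<bar>rt$i\<bar>)" "\<bar>rt$j\<bar> \<le> (\<Sum>i\<in>UNIV. \<bar>rt$i\<bar>)"
        by (auto intro: member_le_sum)
      thus "d 0 i - d 0 j \<le> q ^ 0 * B0"
        by (simp add: d_def fv_0[OF st pp] B0_def)
    qed
  next
    case (Suc m)
    show ?case
    proof (intro allI)
      fix i j
      have "d (Suc m) i - d (Suc m) j \<le> (1 - \<delta>) * (q ^ m * B0)"
        by (rule osc_contract[OF st pp dU D1]) (use Suc.IH dle in auto)
      thus "d (Suc m) i - d (Suc m) j \<le> q ^ Suc m * B0" by (simp add: q_def)
    qed
  qed
  have D7: "\<bar>d m i\<bar> \<le> q ^ m * B0" for m i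
  proof -
    obtain j k where "d m j \<le> 0" "0 \<le> d m k" using D3[of m] by blast
    thus ?thesis using D6[of m] by (smt (verit))
  qed
  have main: "\<bar>expect_F K p \<eta> (n + 1) - real n - (1 + \<eta> \<bullet> rt)\<bar> \<le> q ^ (Suc n) * B0"
    if eta: "prob_vector \<eta>" for \<eta> n
  proof -
    have en: "\<And>i. 0 \<le> \<eta>$i" and es: "(\<Sum>i\<in>UNIV. \<eta>$i) = 1" using eta by (auto simp: prob_vector_def)
    have "expect_F K p \<eta> (n + 1) - real n - (1 + \<eta> \<bullet> rt) = (\<Sum>r\<in>UNIV. \<eta>$r * d (Suc n) r)"
    proof -
      have "(\<Sum>r\<in>UNIV. \<eta>$r * d (Suc n) r) = (\<Sum>r\<in>UNIV. \<eta>$r * fv K p (Suc n) r) - real (Suc n) * (\<Sum>r\<in>UNIV. \<eta>$r) - (\<Sum>r\<in>UNIV. \<eta>$r * rt$r)"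
        unfolding d_def by (simp add: algebra_simps sum_subtractf sum_distrib_left sum.distrib)
      thus ?thesis using es E_fv[OF st pp, of \<eta> n] by (simp add: inner_vec_def)
    qed
    also have "\<bar>\<dots>\<bar> \<le> (\<Sum>r\<in>UNIV. \<eta>$r * (q ^ Suc n * B0))"
    proof -
      have "\<bar>\<Sum>r\<in>UNIV. \<eta>$r * d (Suc n) r\<bar> \<le> (\<Sum>r\<in>UNIV. \<bar>\<eta>$r * d (Suc n) r\<bar>)" by (rule sum_abs)
      also have "\<dots> \<le> (\<Sum>r\<in>UNIV. \<eta>$r * (q ^ Suc n * B0))"
        using en D7 by (intro sum_mono) (metis abs_mult abs_of_nonneg mult_left_mono)
      finally show ?thesis .
    qed
    also have "\<dots> = q ^ Suc n * B0" using es by (simp add: sum_distrib_right[symmetric])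
    finally show ?thesis .
  qed
  define c2 where "c2 = - ln q"
  have c2pos: "c2 > 0" using q by (simp add: c2_def)
  have qexp: "q ^ n = exp (- c2 * real n)" for n
  proof -
    have "exp (- c2 * real n) = exp (real n * ln q)" by (simp add: c2_def)
    also have "\<dots> = exp (ln q) ^ n" by (rule exp_of_nat_mult)
    also have "\<dots> = q ^ n" using q by simp
    finally show ?thesis by simp
  qed
  have bound: "\<bar>expect_F K p \<eta> (n + 1) - real n - (1 + \<eta> \<bullet> rt)\<bar> \<le> (B0 + 1) * exp (- c2 * real n)"
    if eta: "prob_vector \<eta>" for \<eta> n
  proof -
    have "q ^ Suc n * B0 \<le> q ^ n * B0"
      using q B0nn by (intro mult_right_mono) (auto intro: power_decreasing)
    also have "\<dots> \<le> q ^ n * (B0 + 1)" using q by (intro mult_left_mono) auto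
    finally have h1: "q ^ Suc n * B0 \<le> (B0 + 1) * q ^ n" by (simp add: mult.commute)
    show ?thesis using order_trans[OF main[OF eta, of n] h1] unfolding qexp .
  qed
  have lim: "(\<lambda>n. expect_F K p \<eta> (n + 1) / real n) \<longlonglongrightarrow> 1" if eta: "prob_vector \<eta>" for \<eta>
  proof -
    define C where "C = 1 + \<eta> \<bullet> rt"
    define b where "b n = expect_F K p \<eta> (n + 1) - real n" for n
    have bb: "\<bar>b n\<bar> \<le> (B0 + 1) + \<bar>C\<bar>" for n
    proof -
      have "exp (- c2 * real n) \<le> 1" using c2pos by simp
      hence "(B0 + 1) * exp (- c2 * real n) \<le> B0 + 1" using B0nn by (simp add: mult_left_le)
      thus ?thesis using bound[OF eta, of n] unfolding b_def C_def by linarith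
    qed
    have "(\<lambda>n. b n / real n) \<longlonglongrightarrow> 0"
    proof (rule Lim_null_comparison)
      show "\<forall>\<^sub>F n in sequentially. norm (b n / real n) \<le> ((B0 + 1) + \<bar>C\<bar>) / real n"
        using bb by (intro always_eventually allI) (simp add: abs_divide divide_right_mono)
      show "(\<lambda>n. ((B0 + 1) + \<bar>C\<bar>) / real n) \<longlonglongrightarrow> 0"
        by (rule tendsto_divide_0[OF tendsto_const filterlim_at_top_imp_at_infinity[OF filterlim_real_sequentially]])
    qed
    hence "(\<lambda>n. 1 + b n / real n) \<longlonglongrightarrow> 1 + 0" by (intro tendsto_add tendsto_const)
    hence "(\<lambda>n. 1 + b n / real n) \<longlonglongrightarrow> 1" by simp
    moreover have "\<forall>\<^sub>F n in sequentially. 1 + b n / real n = expect_F K p \<eta> (n + 1) / real n"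
      using eventually_ge_at_top[of 1] by eventually_elim (simp add: b_def field_simps)
    ultimately show ?thesis by (rule Lim_transform_eventually)
  qed
  show ?thesis
    using lim bound c2pos B0nn unfolding rt_def
    by (intro conjI allI impI exI[of _ "B0 + 1"] exI[of _ c2]) auto
qed


end
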